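(* Let $Y_1,\dots,Y_n$ be independent centered random variables with values in $[-1,1]$. Let $\rho:=\sum_{i=1}^n\mathbb E Y_i^2$, $S:=\sum_{i=1}^nY_i$, $\Psi(y_1,\dots,y_n):=\frac12\big(\prod_i(1+y_i)-\prod_i(1-y_i)\big)$, and $R:=\Psi(Y_1,\dots,Y_n)-S$. Then: (a) $\mathbb E R^2\le\sinh(\rho)-\rho$ and $\mathbb E|R|\le\sqrt{\sinh(\rho)-\rho}$; (b) $\mathbb E|S|\ge\rho/\sqrt{1+3\rho}$; (c) the function $D_r(\rho):=\sqrt{(1+3\rho)(\sinh\rho-\rho)/\rho^2}$ for $\rho>0$, $D_r(0):=0$, is increasing on $[0,\infty)$, and \[ (1-D_r(\rho))\,\mathbb E|S|\le\mathbb E|\Psi(Y_1,\dots,Y_n)|\le(1+D_r(\rho))\,\mathbb E|S|. \] *)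

theory Defs
  imports "HOL-Probability.Probability"
begin

definition Psi :: "nat \<Rightarrow> (nat \<Rightarrow> real) \<Rightarrow> real" where
  "Psi n y = ((\<Prod>i<n. 1 + y i) - (\<Prod>i<n. 1 - y i)) / 2"

definition Dr :: "real \<Rightarrow> real" where
  "Dr \<rho> = (if \<rho> = 0 then 0 else sqrt ((1 + 3 * \<rho>) * (sinh \<rho> - \<rho>) / \<rho>\<^sup>2))"

end

theory Submission
  imports Defs
begin



definition bnd :: "'a measure \<Rightarrow> ('a \<Rightarrow> real) \<Rightarrow> bool" where
  "bnd M f \<longleftrightarrow> (\<exists>c. \<forall>\<omega>\<in>space M. \<bar>f \<omega>\<bar> \<le> c)"

lemma (in finite_measure) bnd_integrable:
  assumes "bnd M f" "f \<in> borel_measurable M" shows "integrable M f"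
proof -
  obtain c where c: "\<forall>\<omega>\<in>space M. \<bar>f \<omega>\<bar> \<le> c" using assms(1) unfolding bnd_def by blast
  show ?thesis by (rule integrable_const_bound[where B=c]) (use c assms(2) in auto)
qed

lemma meas_loc:
  assumes Y: "\<And>i. i < k \<Longrightarrow> Y i \<in> borel_measurable M"
    and A: "A \<in> borel_measurable (PiM {..<k} (\<lambda>_. borel))"
    and Aloc: "\<And>v w. (\<And>i. i < k \<Longrightarrow> v i = w i) \<Longrightarrow> A v = A w"
  shows "(\<lambda>\<omega>. A (\<lambda>i. Y i \<omega>)) \<in> borel_measurable M"
proof -
  have "(\<lambda>\<omega>. A (restrict (\<lambda>i. Y i \<omega>) {..<k})) \<in> borel_measurable M"
    by (rule measurable_compose[OF measurable_restrict A]) (use Y in auto)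
  moreover have "\<And>\<omega>. A (restrict (\<lambda>i. Y i \<omega>) {..<k}) = A (\<lambda>i. Y i \<omega>)"
    by (rule Aloc) simp
  ultimately show ?thesis by simp
qed

lemma (in prob_space) indep_prod_integral:
  fixes Y :: "nat \<Rightarrow> 'a \<Rightarrow> real"
  assumes ind: "indep_vars (\<lambda>_. borel) Y {..<n}" and k: "k < n"
    and A: "A \<in> borel_measurable (PiM {..<k} (\<lambda>_. borel))"
    and Aloc: "\<And>v w. (\<And>i. i < k \<Longrightarrow> v i = w i) \<Longrightarrow> A v = A w"
    and B: "B \<in> borel_measurable borel"
    and Ab: "bnd M (\<lambda>\<omega>. A (\<lambda>i. Y i \<omega>))"
    and Bb: "bnd M (\<lambda>\<omega>. B (Y k \<omega>))"
  shows "(\<integral>\<omega>. A (\<lambda>i. Y i \<omega>) * B (Y k \<omega>) \<partial>M) = (\<integral>\<omega>. A (\<lambda>i. Y i \<omega>) \<partial>M) * (\<integral>\<omega>. B (Y k \<omega>) \<partial>M)"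
proof -
  have Ym: "\<And>i. i < n \<Longrightarrow> Y i \<in> borel_measurable M"
    using ind unfolding indep_vars_def by auto
  have iv: "indep_var (PiM {..<k} (\<lambda>_. borel)) (\<lambda>\<omega>. restrict (\<lambda>i. Y i \<omega>) {..<k})
     (PiM {k} (\<lambda>_. borel)) (\<lambda>\<omega>. restrict (\<lambda>i. Y i \<omega>) {k})"
    by (rule indep_var_restrict[OF ind]) (use k in auto)
  have "indep_var borel (A \<circ> (\<lambda>\<omega>. restrict (\<lambda>i. Y i \<omega>) {..<k}))
     borel ((\<lambda>f. B (f k)) \<circ> (\<lambda>\<omega>. restrict (\<lambda>i. Y i \<omega>) {k}))"
    by (rule indep_var_compose[OF iv A]) (rule measurable_compose[OF measurable_component_singleton[of k "{k}" "\<lambda>_. borel"] B], simp)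
  moreover have "A \<circ> (\<lambda>\<omega>. restrict (\<lambda>i. Y i \<omega>) {..<k}) = (\<lambda>\<omega>. A (\<lambda>i. Y i \<omega>))"
    by (rule ext, simp only: comp_def, rule Aloc, simp)
  moreover have "((\<lambda>f. B (f k)) \<circ> (\<lambda>\<omega>. restrict (\<lambda>i. Y i \<omega>) {k})) = (\<lambda>\<omega>. B (Y k \<omega>))"
    by auto
  ultimately have iv2: "indep_var borel (\<lambda>\<omega>. A (\<lambda>i. Y i \<omega>)) borel (\<lambda>\<omega>. B (Y k \<omega>))" by simp
  have m1: "(\<lambda>\<omega>. A (\<lambda>i. Y i \<omega>)) \<in> borel_measurable M"
    by (rule meas_loc[OF _ A Aloc]) (use Ym k in auto)
  have m2: "(\<lambda>\<omega>. B (Y k \<omega>)) \<in> borel_measurable M"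
    using measurable_compose[OF Ym[OF k] B] .
  show ?thesis
    by (rule indep_var_lebesgue_integral[OF iv2 bnd_integrable[OF Ab m1] bnd_integrable[OF Bb m2]])
qed


lemma bnd_const: "bnd M (\<lambda>_. c)" unfolding bnd_def by (intro exI[of _ "\<bar>c\<bar>"]) auto

lemma bnd_add: "bnd M f \<Longrightarrow> bnd M g \<Longrightarrow> bnd M (\<lambda>x. f x + g x)"
  unfolding bnd_def
proof (elim exE)
  fix c d assume "\<forall>\<omega>\<in>space M. \<bar>f \<omega>\<bar> \<le> c" "\<forall>\<omega>\<in>space M. \<bar>g \<omega>\<bar> \<le> d"
  then show "\<exists>c. \<forall>\<omega>\<in>space M. \<bar>f \<omega> + g \<omega>\<bar> \<le> c"
    by (intro exI[of _ "c + d"]) (auto intro: order_trans[OF abs_triangle_ineq] add_mono)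
qed

lemma bnd_mult: "bnd M f \<Longrightarrow> bnd M g \<Longrightarrow> bnd M (\<lambda>x. f x * g x)"
  unfolding bnd_def
proof (elim exE)
  fix c d assume "\<forall>\<omega>\<in>space M. \<bar>f \<omega>\<bar> \<le> c" "\<forall>\<omega>\<in>space M. \<bar>g \<omega>\<bar> \<le> d"
  then show "\<exists>c. \<forall>\<omega>\<in>space M. \<bar>f \<omega> * g \<omega>\<bar> \<le> c"
  proof (intro exI[of _ "c * d"] ballI)
    fix \<omega> assume w: "\<omega> \<in> space M"
    with \<open>\<forall>\<omega>\<in>space M. \<bar>f \<omega>\<bar> \<le> c\<close> \<open>\<forall>\<omega>\<in>space M. \<bar>g \<omega>\<bar> \<le> d\<close>
    have "\<bar>f \<omega>\<bar> \<le> c" "\<bar>g \<omega>\<bar> \<le> d" by auto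
    then show "\<bar>f \<omega> * g \<omega>\<bar> \<le> c * d"
      unfolding abs_mult by (intro mult_mono) auto
  qed
qed

lemma bnd_uminus: "bnd M f \<Longrightarrow> bnd M (\<lambda>x. - f x)"
  unfolding bnd_def by simp

lemma bnd_diff: "bnd M f \<Longrightarrow> bnd M g \<Longrightarrow> bnd M (\<lambda>x. f x - g x)"
  using bnd_add[of M f "\<lambda>x. - g x"] bnd_uminus[of M g] by simp

lemma bnd_power: "bnd M f \<Longrightarrow> bnd M (\<lambda>x. f x ^ m)"
  by (induction m) (auto intro: bnd_const bnd_mult)

lemma bnd_abs: "bnd M f \<Longrightarrow> bnd M (\<lambda>x. \<bar>f x\<bar>)"
  unfolding bnd_def by simp

lemma (in prob_space) square_step:
  fixes Y :: "nat \<Rightarrow> 'a \<Rightarrow> real"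
  assumes ind: "indep_vars (\<lambda>_. borel) Y {..<n}" and k: "k < n"
    and A: "A \<in> borel_measurable (PiM {..<k} (\<lambda>_. borel))"
    and Aloc: "\<And>v w. (\<And>i. i < k \<Longrightarrow> v i = w i) \<Longrightarrow> A v = A w"
    and B: "B \<in> borel_measurable (PiM {..<k} (\<lambda>_. borel))"
    and Bloc: "\<And>v w. (\<And>i. i < k \<Longrightarrow> v i = w i) \<Longrightarrow> B v = B w"
    and Ab: "bnd M (\<lambda>\<omega>. A (\<lambda>i. Y i \<omega>))"
    and Bb: "bnd M (\<lambda>\<omega>. B (\<lambda>i. Y i \<omega>))"
    and Yb: "bnd M (Y k)"
    and Y0: "(\<integral>\<omega>. Y k \<omega> \<partial>M) = 0"
  shows "(\<integral>\<omega>. (A (\<lambda>i. Y i \<omega>) + Y k \<omega> * B (\<lambda>i. Y i \<omega>))\<^sup>2 \<partial>M)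
     = (\<integral>\<omega>. (A (\<lambda>i. Y i \<omega>))\<^sup>2 \<partial>M) + (\<integral>\<omega>. (Y k \<omega>)\<^sup>2 \<partial>M) * (\<integral>\<omega>. (B (\<lambda>i. Y i \<omega>))\<^sup>2 \<partial>M)"
proof -
  have Ym: "\<And>i. i < n \<Longrightarrow> Y i \<in> borel_measurable M"
    using ind unfolding indep_vars_def by auto
  have [measurable]: "(\<lambda>\<omega>. A (\<lambda>i. Y i \<omega>)) \<in> borel_measurable M"
    by (rule meas_loc[OF _ A Aloc]) (use Ym k in auto)
  have [measurable]: "(\<lambda>\<omega>. B (\<lambda>i. Y i \<omega>)) \<in> borel_measurable M"
    by (rule meas_loc[OF _ B Bloc]) (use Ym k in auto)
  have [measurable]: "Y k \<in> borel_measurable M" using Ym k by auto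
  have [measurable]: "A \<in> borel_measurable (PiM {..<k} (\<lambda>_. borel))" "B \<in> borel_measurable (PiM {..<k} (\<lambda>_. borel))"
    using A B by auto
  let ?a = "\<lambda>\<omega>. A (\<lambda>i. Y i \<omega>)" and ?b = "\<lambda>\<omega>. B (\<lambda>i. Y i \<omega>)"
  have i1: "integrable M (\<lambda>\<omega>. (?a \<omega>)\<^sup>2)"
    by (rule bnd_integrable) (auto intro: bnd_power Ab)
  have i2: "integrable M (\<lambda>\<omega>. (2 * ?a \<omega> * ?b \<omega>) * Y k \<omega>)"
    by (rule bnd_integrable) (auto intro!: bnd_mult bnd_const Ab Bb Yb)
  have i3: "integrable M (\<lambda>\<omega>. (?b \<omega>)\<^sup>2 * (Y k \<omega>)\<^sup>2)"
    by (rule bnd_integrable) (auto intro!: bnd_mult bnd_power Bb Yb)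
  have e2: "(\<integral>\<omega>. (2 * ?a \<omega> * ?b \<omega>) * Y k \<omega> \<partial>M) = 0"
  proof -
    have "(\<integral>\<omega>. (2 * ?a \<omega> * ?b \<omega>) * Y k \<omega> \<partial>M) = (\<integral>\<omega>. 2 * ?a \<omega> * ?b \<omega> \<partial>M) * (\<integral>\<omega>. Y k \<omega> \<partial>M)"
    proof (rule indep_prod_integral[OF ind k, of "\<lambda>v. 2 * A v * B v" "\<lambda>y. y"])
      show "(\<lambda>v. 2 * A v * B v) \<in> borel_measurable (PiM {..<k} (\<lambda>_. borel))" by measurable
      show "\<And>v w. (\<And>i. i < k \<Longrightarrow> v i = w i) \<Longrightarrow> 2 * A v * B v = 2 * A w * B w"
        using Aloc Bloc by metis
      show "bnd M (\<lambda>\<omega>. 2 * A (\<lambda>i. Y i \<omega>) * B (\<lambda>i. Y i \<omega>))"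
        by (rule bnd_mult[OF bnd_mult[OF bnd_const Ab] Bb])
      show "bnd M (\<lambda>\<omega>. Y k \<omega>)" using Yb by simp
    qed simp
    then show ?thesis using Y0 by simp
  qed
  have e3: "(\<integral>\<omega>. (?b \<omega>)\<^sup>2 * (Y k \<omega>)\<^sup>2 \<partial>M) = (\<integral>\<omega>. (?b \<omega>)\<^sup>2 \<partial>M) * (\<integral>\<omega>. (Y k \<omega>)\<^sup>2 \<partial>M)"
  proof (rule indep_prod_integral[OF ind k, of "\<lambda>v. (B v)\<^sup>2" "\<lambda>y. y\<^sup>2"])
    show "(\<lambda>v. (B v)\<^sup>2) \<in> borel_measurable (PiM {..<k} (\<lambda>_. borel))" by measurable
    show "\<And>v w. (\<And>i. i < k \<Longrightarrow> v i = w i) \<Longrightarrow> (B v)\<^sup>2 = (B w)\<^sup>2"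
      using Bloc by metis
    show "bnd M (\<lambda>\<omega>. (B (\<lambda>i. Y i \<omega>))\<^sup>2)" by (rule bnd_power[OF Bb])
    show "bnd M (\<lambda>\<omega>. (Y k \<omega>)\<^sup>2)" by (rule bnd_power[OF Yb])
  qed simp
  have "(\<lambda>\<omega>. (?a \<omega> + Y k \<omega> * ?b \<omega>)\<^sup>2) = (\<lambda>\<omega>. (?a \<omega>)\<^sup>2 + (2 * ?a \<omega> * ?b \<omega>) * Y k \<omega> + (?b \<omega>)\<^sup>2 * (Y k \<omega>)\<^sup>2)"
    by (auto simp: power2_eq_square algebra_simps)
  then have "(\<integral>\<omega>. (?a \<omega> + Y k \<omega> * ?b \<omega>)\<^sup>2 \<partial>M) = (\<integral>\<omega>. (?a \<omega>)\<^sup>2 \<partial>M) + (\<integral>\<omega>. (2 * ?a \<omega> * ?b \<omega>) * Y k \<omega> \<partial>M) + (\<integral>\<omega>. (?b \<omega>)\<^sup>2 * (Y k \<omega>)\<^sup>2 \<partial>M)"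
    using i1 i2 i3 by simp
  then show ?thesis using e2 e3 by simp
qed

lemma (in prob_space) quartic_step:
  fixes Y :: "nat \<Rightarrow> 'a \<Rightarrow> real"
  assumes ind: "indep_vars (\<lambda>_. borel) Y {..<n}" and k: "k < n"
    and A: "A \<in> borel_measurable (PiM {..<k} (\<lambda>_. borel))"
    and Aloc: "\<And>v w. (\<And>i. i < k \<Longrightarrow> v i = w i) \<Longrightarrow> A v = A w"
    and Ab: "bnd M (\<lambda>\<omega>. A (\<lambda>i. Y i \<omega>))"
    and A0: "(\<integral>\<omega>. A (\<lambda>i. Y i \<omega>) \<partial>M) = 0"
    and Yb: "bnd M (Y k)"
    and Y0: "(\<integral>\<omega>. Y k \<omega> \<partial>M) = 0"
  shows "(\<integral>\<omega>. (A (\<lambda>i. Y i \<omega>) + Y k \<omega>) ^ 4 \<partial>M)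
     = (\<integral>\<omega>. (A (\<lambda>i. Y i \<omega>)) ^ 4 \<partial>M) + 6 * (\<integral>\<omega>. (A (\<lambda>i. Y i \<omega>))\<^sup>2 \<partial>M) * (\<integral>\<omega>. (Y k \<omega>)\<^sup>2 \<partial>M)
       + (\<integral>\<omega>. (Y k \<omega>) ^ 4 \<partial>M)"
proof -
  have Ym: "\<And>i. i < n \<Longrightarrow> Y i \<in> borel_measurable M"
    using ind unfolding indep_vars_def by auto
  have [measurable]: "(\<lambda>\<omega>. A (\<lambda>i. Y i \<omega>)) \<in> borel_measurable M"
    by (rule meas_loc[OF _ A Aloc]) (use Ym k in auto)
  have [measurable]: "Y k \<in> borel_measurable M" using Ym k by auto
  have [measurable]: "A \<in> borel_measurable (PiM {..<k} (\<lambda>_. borel))"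
    using A by auto
  let ?a = "\<lambda>\<omega>. A (\<lambda>i. Y i \<omega>)" and ?y = "Y k"
  have i: "integrable M (\<lambda>\<omega>. (?a \<omega>) ^ p * (?y \<omega>) ^ q)" for p q
  proof (rule bnd_integrable)
    show "bnd M (\<lambda>\<omega>. (?a \<omega>) ^ p * (?y \<omega>) ^ q)"
      by (rule bnd_mult[OF bnd_power[OF Ab] bnd_power[OF Yb]])
  qed measurable
  have e: "(\<integral>\<omega>. (?a \<omega>) ^ p * (?y \<omega>) ^ q \<partial>M) = (\<integral>\<omega>. (?a \<omega>) ^ p \<partial>M) * (\<integral>\<omega>. (?y \<omega>) ^ q \<partial>M)" for p q
  proof (rule indep_prod_integral[OF ind k, of "\<lambda>v. (A v) ^ p" "\<lambda>y. y ^ q"])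
    show "(\<lambda>v. (A v) ^ p) \<in> borel_measurable (PiM {..<k} (\<lambda>_. borel))" by measurable
    show "\<And>v w. (\<And>i. i < k \<Longrightarrow> v i = w i) \<Longrightarrow> (A v) ^ p = (A w) ^ p"
      using Aloc by metis
    show "bnd M (\<lambda>\<omega>. (A (\<lambda>i. Y i \<omega>)) ^ p)" by (rule bnd_power[OF Ab])
    show "bnd M (\<lambda>\<omega>. (Y k \<omega>) ^ q)" by (rule bnd_power[OF Yb])
  qed simp
  define F where "F p q = (\<lambda>\<omega>. (?a \<omega>) ^ p * (?y \<omega>) ^ q)" for p q
  have iF: "integrable M (F p q)" for p q unfolding F_def by (rule i)
  have eF: "integral\<^sup>L M (F p q) = (\<integral>\<omega>. (?a \<omega>) ^ p \<partial>M) * (\<integral>\<omega>. (?y \<omega>) ^ q \<partial>M)" for p q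
    unfolding F_def by (rule e)
  have "(\<lambda>\<omega>. (?a \<omega> + ?y \<omega>) ^ 4) = (\<lambda>\<omega>. F 4 0 \<omega> + 4 * F 3 1 \<omega> + 6 * F 2 2 \<omega> + 4 * F 1 3 \<omega> + F 0 4 \<omega>)"
    unfolding F_def by (rule ext) (simp add: eval_nat_numeral algebra_simps)
  then have "(\<integral>\<omega>. (?a \<omega> + ?y \<omega>) ^ 4 \<partial>M) = 
     integral\<^sup>L M (F 4 0) + 4 * integral\<^sup>L M (F 3 1) + 6 * integral\<^sup>L M (F 2 2) + 4 * integral\<^sup>L M (F 1 3) + integral\<^sup>L M (F 0 4)"
    using iF by simp
  also have "\<dots> = (\<integral>\<omega>. (?a \<omega>) ^ 4 \<partial>M) + 6 * (\<integral>\<omega>. (?a \<omega>)\<^sup>2 \<partial>M) * (\<integral>\<omega>. (?y \<omega>)\<^sup>2 \<partial>M) + (\<integral>\<omega>. (?y \<omega>) ^ 4 \<partial>M)"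
    unfolding eF using A0 Y0 by (simp add: prob_space)
  finally show ?thesis .
qed


lemma bnd_prod: "(\<And>i. i \<in> I \<Longrightarrow> bnd M (f i)) \<Longrightarrow> bnd M (\<lambda>x. \<Prod>i\<in>I. f i x)"
proof (induction I rule: infinite_finite_induct)
  case (infinite A) then show ?case by (simp add: bnd_const)
next
  case empty then show ?case by (simp add: bnd_const)
next
  case (insert a A)
  then show ?case by (simp add: bnd_mult)
qed

lemma bnd_sum: "(\<And>i. i \<in> I \<Longrightarrow> bnd M (f i)) \<Longrightarrow> bnd M (\<lambda>x. \<Sum>i\<in>I. f i x)"
proof (induction I rule: infinite_finite_induct)
  case (infinite A) then show ?case by (simp add: bnd_const)
next
  case empty then show ?case by (simp add: bnd_const)
next
  case (insert a A)
  then show ?case by (simp add: bnd_add)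
qed

lemma bnd_divide: "bnd M f \<Longrightarrow> bnd M (\<lambda>x. f x / d)"
  using bnd_mult[OF _ bnd_const, of M f "1/d"] by simp

lemma bnd_sqrt: "bnd M f \<Longrightarrow> bnd M (\<lambda>x. sqrt (f x))"
  unfolding bnd_def
proof (elim exE)
  fix c assume c: "\<forall>\<omega>\<in>space M. \<bar>f \<omega>\<bar> \<le> c"
  show "\<exists>c. \<forall>\<omega>\<in>space M. \<bar>sqrt (f \<omega>)\<bar> \<le> c"
  proof (intro exI[of _ "sqrt c"] ballI)
    fix \<omega> assume "\<omega> \<in> space M"
    with c have "\<bar>f \<omega>\<bar> \<le> c" by auto
    moreover have "\<bar>sqrt (f \<omega>)\<bar> = sqrt \<bar>f \<omega>\<bar>"
      by (cases "f \<omega> \<ge> 0") (auto simp: real_sqrt_minus)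
    ultimately show "\<bar>sqrt (f \<omega>)\<bar> \<le> sqrt c" by simp
  qed
qed

lemma quad_disc:
  fixes a b c :: real
  assumes b: "0 \<le> b" and q: "\<And>t. 0 \<le> a - 2 * t * c + t\<^sup>2 * b"
  shows "c\<^sup>2 \<le> a * b"
proof (cases "b = 0")
  case True
  show ?thesis
  proof (cases "c = 0")
    case False
    have "0 \<le> a - 2 * ((a + 1) / (2 * c)) * c + ((a + 1) / (2 * c))\<^sup>2 * b" by (rule q)
    then show ?thesis using True False by (simp add: field_simps)
  qed (use True in simp)
next
  case False
  then have b0: "b > 0" using b by simp
  have "0 \<le> a - 2 * (c / b) * c + (c / b)\<^sup>2 * b" by (rule q)
  then have "0 \<le> a * b - c\<^sup>2" using b0 by (simp add: field_simps power2_eq_square)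
  then show ?thesis by simp
qed

lemma (in finite_measure) cs_bnd:
  fixes f g :: "'a \<Rightarrow> real"
  assumes [measurable]: "f \<in> borel_measurable M" "g \<in> borel_measurable M"
    and fb: "bnd M f" and gb: "bnd M g"
  shows "(\<integral>x. f x * g x \<partial>M)\<^sup>2 \<le> (\<integral>x. (f x)\<^sup>2 \<partial>M) * (\<integral>x. (g x)\<^sup>2 \<partial>M)"
proof (rule quad_disc)
  show "0 \<le> (\<integral>x. (g x)\<^sup>2 \<partial>M)" by simp
  fix t :: real
  have i1: "integrable M (\<lambda>x. (f x)\<^sup>2)" by (rule bnd_integrable[OF bnd_power[OF fb]]) measurable
  have i2: "integrable M (\<lambda>x. f x * g x)" by (rule bnd_integrable[OF bnd_mult[OF fb gb]]) measurable
  have i3: "integrable M (\<lambda>x. (g x)\<^sup>2)" by (rule bnd_integrable[OF bnd_power[OF gb]]) measurable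
  have "(\<lambda>x. (f x - t * g x)\<^sup>2) = (\<lambda>x. (f x)\<^sup>2 - 2 * t * (f x * g x) + t\<^sup>2 * (g x)\<^sup>2)"
    by (rule ext) (simp add: power2_eq_square algebra_simps)
  then have "(\<integral>x. (f x - t * g x)\<^sup>2 \<partial>M) = (\<integral>x. (f x)\<^sup>2 \<partial>M) - 2 * t * (\<integral>x. f x * g x \<partial>M) + t\<^sup>2 * (\<integral>x. (g x)\<^sup>2 \<partial>M)"
    using i1 i2 i3 by simp
  moreover have "0 \<le> (\<integral>x. (f x - t * g x)\<^sup>2 \<partial>M)" by simp
  ultimately show "0 \<le> (\<integral>x. (f x)\<^sup>2 \<partial>M) - 2 * t * (\<integral>x. f x * g x \<partial>M) + t\<^sup>2 * (\<integral>x. (g x)\<^sup>2 \<partial>M)"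
    by simp
qed

lemma (in prob_space) abs_le_sqrt:
  fixes f :: "'a \<Rightarrow> real"
  assumes [measurable]: "f \<in> borel_measurable M" and fb: "bnd M f"
  shows "(\<integral>x. \<bar>f x\<bar> \<partial>M) \<le> sqrt (\<integral>x. (f x)\<^sup>2 \<partial>M)"
proof -
  have "(\<integral>x. \<bar>f x\<bar> * 1 \<partial>M)\<^sup>2 \<le> (\<integral>x. \<bar>f x\<bar>\<^sup>2 \<partial>M) * (\<integral>x. 1\<^sup>2 \<partial>M)"
    by (rule cs_bnd) (auto intro: bnd_abs fb bnd_const)
  then have "(\<integral>x. \<bar>f x\<bar> \<partial>M)\<^sup>2 \<le> (\<integral>x. (f x)\<^sup>2 \<partial>M)" by (simp add: prob_space)
  then show ?thesis by (rule real_le_rsqrt)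
qed





lemma sinh_ge_x: "0 \<le> x \<Longrightarrow> x \<le> sinh (x::real)"
  using real_le_x_sinh[of x] by (simp add: sinh_field_def exp_minus)

lemma h1_nonneg:
  assumes "0 \<le> (x::real)" shows "0 \<le> x * sinh x + 1 - cosh x"
proof -
  have "(\<lambda>x. x * sinh x + 1 - cosh x) 0 \<le> (\<lambda>x. x * sinh x + 1 - cosh x) x"
  proof (rule DERIV_nonneg_imp_increasing_open[OF assms])
    fix t :: real assume t: "0 < t" "t < x"
    have "((\<lambda>x. x * sinh x + 1 - cosh x) has_real_derivative t * cosh t) (at t)"
      by (auto intro!: derivative_eq_intros)
    then show "\<exists>y. ((\<lambda>x. x * sinh x + 1 - cosh x) has_real_derivative y) (at t) \<and> 0 \<le> y"
      using t by (intro exI[of _ "t * cosh t"]) auto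
  qed (intro continuous_intros)
  then show ?thesis by simp
qed

lemma h_nonneg:
  assumes "0 \<le> (x::real)" shows "0 \<le> x * cosh x + x - 2 * sinh x"
proof -
  have "(\<lambda>x. x * cosh x + x - 2 * sinh x) 0 \<le> (\<lambda>x. x * cosh x + x - 2 * sinh x) x"
  proof (rule DERIV_nonneg_imp_increasing_open[OF assms])
    fix t :: real assume t: "0 < t" "t < x"
    have "((\<lambda>x. x * cosh x + x - 2 * sinh x) has_real_derivative t * sinh t + 1 - cosh t) (at t)"
      by (auto intro!: derivative_eq_intros)
    then show "\<exists>y. ((\<lambda>x. x * cosh x + x - 2 * sinh x) has_real_derivative y) (at t) \<and> 0 \<le> y"
      using t h1_nonneg[of t] by (intro exI[of _ "t * sinh t + 1 - cosh t"]) auto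
  qed (intro continuous_intros)
  then show ?thesis by simp
qed

lemma g_mono:
  assumes "0 < a" "a \<le> (b::real)" shows "(sinh a - a) / a\<^sup>2 \<le> (sinh b - b) / b\<^sup>2"
proof -
  have "(\<lambda>x. (sinh x - x) / x\<^sup>2) a \<le> (\<lambda>x. (sinh x - x) / x\<^sup>2) b"
  proof (rule DERIV_nonneg_imp_increasing_open[OF assms(2)])
    fix t :: real assume t: "a < t" "t < b"
    then have t0: "t > 0" using assms by simp
    have "((\<lambda>x. (sinh x - x) / x\<^sup>2) has_real_derivative (t * cosh t + t - 2 * sinh t) / t ^ 3) (at t)"
      using t0 by (auto intro!: derivative_eq_intros simp: field_simps power2_eq_square power3_eq_cube)
    then show "\<exists>y. ((\<lambda>x. (sinh x - x) / x\<^sup>2) has_real_derivative y) (at t) \<and> 0 \<le> y"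
      using t0 h_nonneg[of t] by (intro exI[of _ "(t * cosh t + t - 2 * sinh t) / t ^ 3"]) auto
  next
    show "continuous_on {a..b} (\<lambda>x. (sinh x - x) / x\<^sup>2)"
      using assms by (intro continuous_intros) auto
  qed
  then show ?thesis by simp
qed

lemma Dr_mono: "mono_on {0..} Dr"
proof (rule mono_onI)
  fix r s :: real assume rs: "r \<in> {0..}" "s \<in> {0..}" "r \<le> s"
  show "Dr r \<le> Dr s"
  proof (cases "r = 0")
    case True then show ?thesis using sinh_ge_x[of s] rs by (auto simp: Dr_def)
  next
    case False
    then have r: "r > 0" using rs by auto
    then have s: "s > 0" using rs by auto
    have g0: "0 \<le> (sinh r - r) / r\<^sup>2" using sinh_ge_x[of r] r by simp
    have "(1 + 3 * r) * ((sinh r - r) / r\<^sup>2) \<le> (1 + 3 * s) * ((sinh s - s) / s\<^sup>2)"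
      by (rule mult_mono) (use rs r g_mono[OF r rs(3)] g0 in auto)
    then show ?thesis using r s by (simp add: Dr_def)
  qed
qed


lemma hyp_base:
  fixes a s :: real assumes "0 \<le> a" "0 \<le> s"
  shows "sinh a + s * cosh a \<le> sinh (a + s)" "cosh a + s * sinh a \<le> cosh (a + s)"
proof -
  have c1: "1 \<le> cosh s" by (rule cosh_real_ge_1)
  have s1: "s \<le> sinh s" using sinh_ge_x assms by simp
  have e1: "sinh a \<le> sinh a * cosh s" using mult_left_mono[OF c1, of "sinh a"] assms by simp
  have e2: "s * cosh a \<le> cosh a * sinh s" using mult_left_mono[OF s1, of "cosh a"] by (simp add: mult.commute)
  show "sinh a + s * cosh a \<le> sinh (a + s)" unfolding sinh_add using e1 e2 by linarith
  have e3: "cosh a \<le> cosh a * cosh s" using mult_left_mono[OF c1, of "cosh a"] by simp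
  have e4: "s * sinh a \<le> sinh a * sinh s" using mult_left_mono[OF s1, of "sinh a"] assms by (simp add: mult.commute)
  show "cosh a + s * sinh a \<le> cosh (a + s)" unfolding cosh_add using e3 e4 by linarith
qed

lemma hyp_steps:
  fixes a s X Z :: real assumes a: "0 \<le> a" and s: "0 \<le> s"
  shows "X \<le> sinh a \<Longrightarrow> Z \<le> cosh a \<Longrightarrow> X + s * Z \<le> sinh (a + s)"
    and "X \<le> cosh a \<Longrightarrow> Z \<le> sinh a \<Longrightarrow> X + s * Z \<le> cosh (a + s)"
    and "X \<le> cosh a - 1 \<Longrightarrow> Z \<le> sinh a \<Longrightarrow> X + s * Z \<le> cosh (a + s) - 1"
    and "X \<le> sinh a - a \<Longrightarrow> Z \<le> cosh a - 1 \<Longrightarrow> X + s * Z \<le> sinh (a + s) - (a + s)"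
proof -
  note h = hyp_base[OF a s]
  show "X \<le> sinh a \<Longrightarrow> Z \<le> cosh a \<Longrightarrow> X + s * Z \<le> sinh (a + s)"
    using h(1) mult_left_mono[of Z "cosh a" s] s by linarith
  show "X \<le> cosh a \<Longrightarrow> Z \<le> sinh a \<Longrightarrow> X + s * Z \<le> cosh (a + s)"
    using h(2) mult_left_mono[of Z "sinh a" s] s by linarith
  show "X \<le> cosh a - 1 \<Longrightarrow> Z \<le> sinh a \<Longrightarrow> X + s * Z \<le> cosh (a + s) - 1"
    using h(2) mult_left_mono[of Z "sinh a" s] s by linarith
  show "X \<le> sinh a - a \<Longrightarrow> Z \<le> cosh a - 1 \<Longrightarrow> X + s * Z \<le> sinh (a + s) - (a + s)"
    using h(1) mult_left_mono[of Z "cosh a - 1" s] s by (simp add: algebra_simps)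
qed


lemma sq_aux:
  fixes y :: real
  shows "sqrt \<bar>y\<bar> * (\<bar>y\<bar> * sqrt \<bar>y\<bar>) = y\<^sup>2"
    and "(sqrt \<bar>y\<bar>)\<^sup>2 = \<bar>y\<bar>"
    and "(\<bar>y\<bar> * sqrt \<bar>y\<bar>)\<^sup>2 = \<bar>y\<bar> ^ 3"
    and "\<bar>y\<bar> * y\<^sup>2 = \<bar>y\<bar> ^ 3"
    and "\<bar>y\<bar>\<^sup>2 = y\<^sup>2"
    and "(y\<^sup>2)\<^sup>2 = y ^ 4"
proof -
  have q: "sqrt \<bar>y\<bar> * sqrt \<bar>y\<bar> = \<bar>y\<bar>" by simp
  show "sqrt \<bar>y\<bar> * (\<bar>y\<bar> * sqrt \<bar>y\<bar>) = y\<^sup>2"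
  proof -
    have "sqrt \<bar>y\<bar> * (\<bar>y\<bar> * sqrt \<bar>y\<bar>) = \<bar>y\<bar> * (sqrt \<bar>y\<bar> * sqrt \<bar>y\<bar>)" by (simp only: mult_ac)
    also have "\<dots> = \<bar>y\<bar> * \<bar>y\<bar>" using q by simp
    also have "\<dots> = y\<^sup>2" by (simp add: power2_eq_square)
    finally show ?thesis .
  qed
  show "(sqrt \<bar>y\<bar>)\<^sup>2 = \<bar>y\<bar>" by simp
  show "(\<bar>y\<bar> * sqrt \<bar>y\<bar>)\<^sup>2 = \<bar>y\<bar> ^ 3"
    by (simp only: power_mult_distrib real_sqrt_pow2[OF abs_ge_zero]) (simp add: power2_eq_square power3_eq_cube)
  show "\<bar>y\<bar> * y\<^sup>2 = \<bar>y\<bar> ^ 3"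
    by (metis abs_mult_self_eq mult.assoc power2_eq_square power3_eq_cube)
  show "\<bar>y\<bar>\<^sup>2 = y\<^sup>2" by simp
  show "(y\<^sup>2)\<^sup>2 = y ^ 4" by simp
qed

theorem lemma3:
  fixes M :: "'a measure" and Y :: "nat \<Rightarrow> 'a \<Rightarrow> real" and n :: nat
  assumes "prob_space M"
    and "prob_space.indep_vars M (\<lambda>_. borel) Y {..<n}"
    and "\<And>i. i < n \<Longrightarrow> Y i \<in> borel_measurable M"
    and "\<And>i x. i < n \<Longrightarrow> x \<in> space M \<Longrightarrow> -1 \<le> Y i x \<and> Y i x \<le> 1"
    and "\<And>i. i < n \<Longrightarrow> (\<integral>x. Y i x \<partial>M) = 0"
  defines "\<rho> \<equiv> (\<Sum>i<n. \<integral>x. (Y i x)\<^sup>2 \<partial>M)"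
    and "S \<equiv> (\<lambda>x. \<Sum>i<n. Y i x)"
    and "R \<equiv> (\<lambda>x. Psi n (\<lambda>i. Y i x) - (\<Sum>i<n. Y i x))"
  shows "(\<integral>x. (R x)\<^sup>2 \<partial>M) \<le> sinh \<rho> - \<rho>
         \<and> (\<integral>x. \<bar>R x\<bar> \<partial>M) \<le> sqrt (sinh \<rho> - \<rho>)
         \<and> (\<integral>x. \<bar>S x\<bar> \<partial>M) \<ge> \<rho> / sqrt (1 + 3 * \<rho>)
         \<and> mono_on {0..} Dr
         \<and> (1 - Dr \<rho>) * (\<integral>x. \<bar>S x\<bar> \<partial>M) \<le> (\<integral>x. \<bar>Psi n (\<lambda>i. Y i x)\<bar> \<partial>M)
         \<and> (\<integral>x. \<bar>Psi n (\<lambda>i. Y i x)\<bar> \<partial>M) \<le> (1 + Dr \<rho>) * (\<integral>x. \<bar>S x\<bar> \<partial>M)"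
proof -
  interpret prob_space M by (rule assms(1))
  have ind: "indep_vars (\<lambda>_. borel) Y {..<n}" using assms(2) .
  have Ym: "\<And>i. i < n \<Longrightarrow> Y i \<in> borel_measurable M" by (rule assms(3))
  have Yabs: "\<And>i x. i < n \<Longrightarrow> x \<in> space M \<Longrightarrow> \<bar>Y i x\<bar> \<le> 1"
    using assms(4) by (simp add: abs_le_iff)
  have Yb: "\<And>i. i < n \<Longrightarrow> bnd M (Y i)" unfolding bnd_def using Yabs by blast
  have Y0: "\<And>i. i < n \<Longrightarrow> (\<integral>x. Y i x \<partial>M) = 0" by (rule assms(5))
  define \<sigma> where "\<sigma> i = (\<integral>x. (Y i x)\<^sup>2 \<partial>M)" for i
  have \<sigma>0: "0 \<le> \<sigma> i" for i by (simp add: \<sigma>_def)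
  define \<rho>k where "\<rho>k k = (\<Sum>i<k. \<sigma> i)" for k
  have \<rho>k0: "0 \<le> \<rho>k k" for k by (simp add: \<rho>k_def sum_nonneg \<sigma>0)
  have \<rho>kS: "\<rho>k (Suc k) = \<rho>k k + \<sigma> k" for k by (simp add: \<rho>k_def)
  have \<rho>\<rho>: "\<rho> = \<rho>k n" by (simp add: \<rho>_def \<rho>k_def \<sigma>_def)

  define PH where "PH k v = ((\<Prod>i<k. 1 + v i) + (\<Prod>i<k. 1 - v i)) / 2" for k and v :: "nat \<Rightarrow> real"
  define SS where "SS k v = (\<Sum>i<k. v i)" for k and v :: "nat \<Rightarrow> real"
  define RR where "RR k v = Psi k v - SS k v" for k v
  define TT where "TT k v = PH k v - 1" for k v
  define E2 where "E2 F = (\<integral>\<omega>. (F (\<lambda>i. Y i \<omega>))\<^sup>2 \<partial>M)" for F :: "(nat \<Rightarrow> real) \<Rightarrow> real"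

  have mPsi: "Psi k \<in> borel_measurable (PiM {..<k} (\<lambda>_. borel))" for k
    unfolding Psi_def by measurable
  have mPH: "PH k \<in> borel_measurable (PiM {..<k} (\<lambda>_. borel))" for k
    unfolding PH_def by measurable
  have mSS: "SS k \<in> borel_measurable (PiM {..<k} (\<lambda>_. borel))" for k
    unfolding SS_def by measurable
  have mRR: "RR k \<in> borel_measurable (PiM {..<k} (\<lambda>_. borel))" for k
    unfolding RR_def SS_def Psi_def by measurable
  have mTT: "TT k \<in> borel_measurable (PiM {..<k} (\<lambda>_. borel))" for k
    unfolding TT_def PH_def by measurable
  have m1: "(\<lambda>v::nat\<Rightarrow>real. 1::real) \<in> borel_measurable (PiM {..<k} (\<lambda>_. borel))" for k
    by simp

  have lprod: "(\<Prod>i<k. f (v i)) = (\<Prod>i<k. f (w i))" if "\<And>i. i < k \<Longrightarrow> v i = w i"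
    for k and f :: "real \<Rightarrow> real" and v w
    by (rule prod.cong) (use that in auto)
  have lsum: "(\<Sum>i<k. v i) = (\<Sum>i<k. w i)" if "\<And>i. i < k \<Longrightarrow> v i = (w i :: real)" for k v w
    by (rule sum.cong) (use that in auto)
  have lPsi: "Psi k v = Psi k w" if "\<And>i. i < k \<Longrightarrow> v i = w i" for k v w
  proof -
    have "(\<Prod>i<k. 1 + v i) = (\<Prod>i<k. 1 + w i)" by (rule prod.cong) (use that in auto)
    moreover have "(\<Prod>i<k. 1 - v i) = (\<Prod>i<k. 1 - w i)" by (rule prod.cong) (use that in auto)
    ultimately show ?thesis unfolding Psi_def by simp
  qed
  have lPH: "PH k v = PH k w" if "\<And>i. i < k \<Longrightarrow> v i = w i" for k v w
  proof -
    have "(\<Prod>i<k. 1 + v i) = (\<Prod>i<k. 1 + w i)" by (rule prod.cong) (use that in auto)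
    moreover have "(\<Prod>i<k. 1 - v i) = (\<Prod>i<k. 1 - w i)" by (rule prod.cong) (use that in auto)
    ultimately show ?thesis unfolding PH_def by simp
  qed
  have lSS: "SS k v = SS k w" if "\<And>i. i < k \<Longrightarrow> v i = w i" for k v w
    unfolding SS_def using lsum[OF that] by simp
  have lRR: "RR k v = RR k w" if "\<And>i. i < k \<Longrightarrow> v i = w i" for k v w
    unfolding RR_def using lPsi[OF that] lSS[OF that] by simp
  have lTT: "TT k v = TT k w" if "\<And>i. i < k \<Longrightarrow> v i = w i" for k v w
    unfolding TT_def using lPH[OF that] by simp

  have bP: "bnd M (\<lambda>\<omega>. \<Prod>i<k. 1 + Y i \<omega>)" if "k \<le> n" for k
    by (rule bnd_prod, rule bnd_add[OF bnd_const Yb]) (use that in auto)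
  have bQ: "bnd M (\<lambda>\<omega>. \<Prod>i<k. 1 - Y i \<omega>)" if "k \<le> n" for k
    by (rule bnd_prod, rule bnd_diff[OF bnd_const Yb]) (use that in auto)
  have bPsi: "bnd M (\<lambda>\<omega>. Psi k (\<lambda>i. Y i \<omega>))" if "k \<le> n" for k
    unfolding Psi_def by (rule bnd_divide[OF bnd_diff[OF bP bQ]]) (use that in auto)
  have bPH: "bnd M (\<lambda>\<omega>. PH k (\<lambda>i. Y i \<omega>))" if "k \<le> n" for k
    unfolding PH_def by (rule bnd_divide[OF bnd_add[OF bP bQ]]) (use that in auto)
  have bSS: "bnd M (\<lambda>\<omega>. SS k (\<lambda>i. Y i \<omega>))" if "k \<le> n" for k
    unfolding SS_def by (rule bnd_sum, rule Yb) (use that in auto)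
  have bRR: "bnd M (\<lambda>\<omega>. RR k (\<lambda>i. Y i \<omega>))" if "k \<le> n" for k
    unfolding RR_def by (rule bnd_diff[OF bPsi[OF that] bSS[OF that]])
  have bTT: "bnd M (\<lambda>\<omega>. TT k (\<lambda>i. Y i \<omega>))" if "k \<le> n" for k
    unfolding TT_def by (rule bnd_diff[OF bPH[OF that] bnd_const])

  have rPsi: "Psi (Suc k) = (\<lambda>v. Psi k v + v k * PH k v)" for k
    unfolding Psi_def PH_def by (rule ext) (simp add: field_simps)
  have rPH: "PH (Suc k) = (\<lambda>v. PH k v + v k * Psi k v)" for k
    unfolding Psi_def PH_def by (rule ext) (simp add: field_simps)
  have rSS: "SS (Suc k) = (\<lambda>v. SS k v + v k * 1)" for k
    unfolding SS_def by (rule ext) simp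
  have rRR: "RR (Suc k) = (\<lambda>v. RR k v + v k * TT k v)" for k
    unfolding RR_def TT_def rPsi rSS by (rule ext) (simp add: algebra_simps)
  have rTT: "TT (Suc k) = (\<lambda>v. TT k v + v k * Psi k v)" for k
    unfolding TT_def rPH by (rule ext) (simp add: algebra_simps)

  have ES0: "(\<integral>\<omega>. SS k (\<lambda>i. Y i \<omega>) \<partial>M) = 0" if "k \<le> n" for k
  proof -
    have "(\<integral>\<omega>. SS k (\<lambda>i. Y i \<omega>) \<partial>M) = (\<Sum>i<k. (\<integral>\<omega>. Y i \<omega> \<partial>M))"
      unfolding SS_def by (rule Bochner_Integration.integral_sum) (use that in \<open>auto intro!: bnd_integrable Yb Ym\<close>)
    also have "\<dots> = 0" using that Y0 by simp
    finally show ?thesis .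
  qed

  have main: "E2 (Psi k) \<le> sinh (\<rho>k k) \<and> E2 (PH k) \<le> cosh (\<rho>k k) \<and> E2 (TT k) \<le> cosh (\<rho>k k) - 1
     \<and> E2 (RR k) \<le> sinh (\<rho>k k) - \<rho>k k \<and> E2 (SS k) = \<rho>k k
     \<and> (\<integral>\<omega>. (SS k (\<lambda>i. Y i \<omega>)) ^ 4 \<partial>M) \<le> \<rho>k k + 3 * (\<rho>k k)\<^sup>2" if "k \<le> n" for k
    using that
  proof (induction k)
    case 0
    then show ?case
      by (simp add: E2_def Psi_def PH_def TT_def RR_def SS_def \<rho>k_def prob_space)
  next
    case (Suc k)
    then have k: "k < n" and kn: "k \<le> n" by auto
    note IH = Suc.IH[OF kn]
    have st: "E2 (\<lambda>v. A v + v k * B v) = E2 A + \<sigma> k * E2 B"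
      if "A \<in> borel_measurable (PiM {..<k} (\<lambda>_. borel))"
        "\<And>v w. (\<And>i. i < k \<Longrightarrow> v i = w i) \<Longrightarrow> A v = A w"
        "B \<in> borel_measurable (PiM {..<k} (\<lambda>_. borel))"
        "\<And>v w. (\<And>i. i < k \<Longrightarrow> v i = w i) \<Longrightarrow> B v = B w"
        "bnd M (\<lambda>\<omega>. A (\<lambda>i. Y i \<omega>))" "bnd M (\<lambda>\<omega>. B (\<lambda>i. Y i \<omega>))" for A B
      using square_step[OF ind k that Yb[OF k] Y0[OF k]] unfolding E2_def \<sigma>_def by simp
    have e1: "E2 (Psi (Suc k)) = E2 (Psi k) + \<sigma> k * E2 (PH k)"
      unfolding rPsi by (rule st[OF mPsi lPsi mPH lPH bPsi[OF kn] bPH[OF kn]])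
    have e2: "E2 (PH (Suc k)) = E2 (PH k) + \<sigma> k * E2 (Psi k)"
      unfolding rPH by (rule st[OF mPH lPH mPsi lPsi bPH[OF kn] bPsi[OF kn]])
    have e3: "E2 (TT (Suc k)) = E2 (TT k) + \<sigma> k * E2 (Psi k)"
      unfolding rTT by (rule st[OF mTT lTT mPsi lPsi bTT[OF kn] bPsi[OF kn]])
    have e4: "E2 (RR (Suc k)) = E2 (RR k) + \<sigma> k * E2 (TT k)"
      unfolding rRR by (rule st[OF mRR lRR mTT lTT bRR[OF kn] bTT[OF kn]])
    have e5: "E2 (SS (Suc k)) = E2 (SS k) + \<sigma> k * E2 (\<lambda>v. 1)"
    proof -
      have l1: "\<And>v w::nat\<Rightarrow>real. (\<And>i. i < k \<Longrightarrow> v i = w i) \<Longrightarrow> (1::real) = 1" by simp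
      show ?thesis unfolding rSS by (rule st[OF mSS lSS m1 l1 bSS[OF kn] bnd_const])
    qed
    have E21: "E2 (\<lambda>v. 1) = 1" by (simp add: E2_def prob_space)
    have Y4: "(\<integral>\<omega>. (Y k \<omega>) ^ 4 \<partial>M) \<le> \<sigma> k"
      unfolding \<sigma>_def
    proof (rule integral_mono)
      show "integrable M (\<lambda>\<omega>. (Y k \<omega>) ^ 4)"
        by (rule bnd_integrable[OF bnd_power[OF Yb[OF k]]]) (use Ym[OF k] in measurable)
      show "integrable M (\<lambda>\<omega>. (Y k \<omega>)\<^sup>2)"
        by (rule bnd_integrable[OF bnd_power[OF Yb[OF k]]]) (use Ym[OF k] in measurable)
      fix x assume x: "x \<in> space M"
      have "(Y k x)\<^sup>2 \<le> 1" using Yabs[OF k x] by (simp add: abs_square_le_1)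
      then have "(Y k x)\<^sup>2 * (Y k x)\<^sup>2 \<le> (Y k x)\<^sup>2 * 1" by (intro mult_left_mono) auto
      then show "(Y k x) ^ 4 \<le> (Y k x)\<^sup>2" by (simp add: power_numeral_reduce power2_eq_square mult.assoc)
    qed
    have e6: "(\<integral>\<omega>. (SS (Suc k) (\<lambda>i. Y i \<omega>)) ^ 4 \<partial>M)
       = (\<integral>\<omega>. (SS k (\<lambda>i. Y i \<omega>)) ^ 4 \<partial>M) + 6 * E2 (SS k) * \<sigma> k + (\<integral>\<omega>. (Y k \<omega>) ^ 4 \<partial>M)"
    proof -
      have "(\<integral>\<omega>. (SS (Suc k) (\<lambda>i. Y i \<omega>)) ^ 4 \<partial>M) = (\<integral>\<omega>. (SS k (\<lambda>i. Y i \<omega>) + Y k \<omega>) ^ 4 \<partial>M)"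
        by (simp add: SS_def)
      also have "\<dots> = (\<integral>\<omega>. (SS k (\<lambda>i. Y i \<omega>)) ^ 4 \<partial>M) + 6 * E2 (SS k) * \<sigma> k + (\<integral>\<omega>. (Y k \<omega>) ^ 4 \<partial>M)"
        unfolding E2_def \<sigma>_def
        by (rule quartic_step[OF ind k mSS lSS bSS[OF kn] ES0[OF kn] Yb[OF k] Y0[OF k]])
      finally show ?thesis .
    qed
    have a0: "0 \<le> \<rho>k k" by (rule \<rho>k0)
    have s0: "0 \<le> \<sigma> k" by (rule \<sigma>0)
    show ?case
    proof (intro conjI)
      show "E2 (Psi (Suc k)) \<le> sinh (\<rho>k (Suc k))"
        unfolding e1 \<rho>kS using IH by (intro hyp_steps(1)[OF a0 s0]) auto
      show "E2 (PH (Suc k)) \<le> cosh (\<rho>k (Suc k))"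
        unfolding e2 \<rho>kS using IH by (intro hyp_steps(2)[OF a0 s0]) auto
      show "E2 (TT (Suc k)) \<le> cosh (\<rho>k (Suc k)) - 1"
        unfolding e3 \<rho>kS using IH by (intro hyp_steps(3)[OF a0 s0]) auto
      show "E2 (RR (Suc k)) \<le> sinh (\<rho>k (Suc k)) - \<rho>k (Suc k)"
        unfolding e4 \<rho>kS using IH by (intro hyp_steps(4)[OF a0 s0]) auto
      show "E2 (SS (Suc k)) = \<rho>k (Suc k)"
        unfolding e5 \<rho>kS E21 using IH by simp
      have "(\<integral>\<omega>. (SS (Suc k) (\<lambda>i. Y i \<omega>)) ^ 4 \<partial>M) \<le> \<rho>k k + 3 * (\<rho>k k)\<^sup>2 + 6 * \<rho>k k * \<sigma> k + \<sigma> k"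
        unfolding e6 using IH Y4 by simp
      also have "\<dots> \<le> \<rho>k (Suc k) + 3 * (\<rho>k (Suc k))\<^sup>2"
        unfolding \<rho>kS using s0 by (simp add: power2_eq_square algebra_simps)
      finally show "(\<integral>\<omega>. (SS (Suc k) (\<lambda>i. Y i \<omega>)) ^ 4 \<partial>M) \<le> \<rho>k (Suc k) + 3 * (\<rho>k (Suc k))\<^sup>2" .
    qed
  qed
  note mn = main[OF order.refl]
  have Req: "R = (\<lambda>x. RR n (\<lambda>i. Y i x))" unfolding R_def RR_def SS_def by simp
  have Seq: "S = (\<lambda>x. SS n (\<lambda>i. Y i x))" unfolding S_def SS_def by simp
  have Ymn: "\<And>i. i < n \<Longrightarrow> Y i \<in> borel_measurable M" by (rule Ym)
  have mR[measurable]: "R \<in> borel_measurable M"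
    unfolding Req by (rule meas_loc[OF Ymn mRR lRR])
  have mS[measurable]: "S \<in> borel_measurable M"
    unfolding Seq by (rule meas_loc[OF Ymn mSS lSS])
  have mP[measurable]: "(\<lambda>x. Psi n (\<lambda>i. Y i x)) \<in> borel_measurable M"
    by (rule meas_loc[OF Ymn mPsi lPsi])
  have bR: "bnd M R" unfolding Req by (rule bRR) simp
  have bS: "bnd M S" unfolding Seq by (rule bSS) simp
  have bPn: "bnd M (\<lambda>x. Psi n (\<lambda>i. Y i x))" by (rule bPsi) simp
  have part1: "(\<integral>x. (R x)\<^sup>2 \<partial>M) \<le> sinh \<rho> - \<rho>"
    using mn unfolding Req E2_def \<rho>\<rho> by simp
  have part2: "(\<integral>x. \<bar>R x\<bar> \<partial>M) \<le> sqrt (sinh \<rho> - \<rho>)"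
    using abs_le_sqrt[OF mR bR] real_sqrt_le_mono[OF part1] by linarith
  have ES2: "(\<integral>x. (S x)\<^sup>2 \<partial>M) = \<rho>"
    using mn unfolding Seq E2_def \<rho>\<rho> by simp
  have ES4: "(\<integral>x. (S x) ^ 4 \<partial>M) \<le> \<rho> + 3 * \<rho>\<^sup>2"
    using mn unfolding Seq \<rho>\<rho> by simp
  have \<rho>0: "0 \<le> \<rho>" unfolding \<rho>\<rho> by (rule \<rho>k0)
  define s1 where "s1 = (\<integral>x. \<bar>S x\<bar> \<partial>M)"
  define s3 where "s3 = (\<integral>x. \<bar>S x\<bar> ^ 3 \<partial>M)"
  define s4 where "s4 = (\<integral>x. (S x) ^ 4 \<partial>M)"
  have s10: "0 \<le> s1" unfolding s1_def by simp
  have s30: "0 \<le> s3" unfolding s3_def by simp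
  have cs1: "\<rho>\<^sup>2 \<le> s1 * s3"
  proof -
    have "(\<integral>x. sqrt \<bar>S x\<bar> * (\<bar>S x\<bar> * sqrt \<bar>S x\<bar>) \<partial>M)\<^sup>2
        \<le> (\<integral>x. (sqrt \<bar>S x\<bar>)\<^sup>2 \<partial>M) * (\<integral>x. (\<bar>S x\<bar> * sqrt \<bar>S x\<bar>)\<^sup>2 \<partial>M)"
      by (rule cs_bnd) (auto intro!: bnd_sqrt bnd_abs bnd_mult bS)
    then show ?thesis unfolding sq_aux ES2 s1_def s3_def .
  qed
  have cs2: "s3\<^sup>2 \<le> \<rho> * s4"
  proof -
    have "(\<integral>x. \<bar>S x\<bar> * (S x)\<^sup>2 \<partial>M)\<^sup>2 \<le> (\<integral>x. \<bar>S x\<bar>\<^sup>2 \<partial>M) * (\<integral>x. ((S x)\<^sup>2)\<^sup>2 \<partial>M)"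
      by (rule cs_bnd) (auto intro!: bnd_abs bnd_power bS)
    then show ?thesis unfolding sq_aux ES2 s3_def s4_def .
  qed
  have part3: "\<rho> / sqrt (1 + 3 * \<rho>) \<le> s1"
  proof (cases "\<rho> = 0")
    case True then show ?thesis using s10 by simp
  next
    case False
    then have rp: "0 < \<rho>" using \<rho>0 by simp
    have "s3\<^sup>2 \<le> \<rho> * (\<rho> + 3 * \<rho>\<^sup>2)"
      using cs2 mult_left_mono[OF ES4[folded s4_def] \<rho>0] by linarith
    have "(\<rho>\<^sup>2)\<^sup>2 \<le> (s1 * s3)\<^sup>2"
      using cs1 rp by (intro power_mono) auto
    also have "\<dots> = s1\<^sup>2 * s3\<^sup>2" by (simp add: power_mult_distrib)
    also have "\<dots> \<le> s1\<^sup>2 * (\<rho> * (\<rho> + 3 * \<rho>\<^sup>2))"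
      by (intro mult_left_mono) (use \<open>s3\<^sup>2 \<le> \<rho> * (\<rho> + 3 * \<rho>\<^sup>2)\<close> in auto)
    finally have A: "(\<rho>\<^sup>2)\<^sup>2 \<le> s1\<^sup>2 * (\<rho> * (\<rho> + 3 * \<rho>\<^sup>2))" .
    have B: "s1\<^sup>2 * (\<rho> * (\<rho> + 3 * \<rho>\<^sup>2)) = \<rho>\<^sup>2 * (s1\<^sup>2 * (1 + 3 * \<rho>))"
      by (simp add: power2_eq_square algebra_simps)
    have C: "(\<rho>\<^sup>2)\<^sup>2 = \<rho>\<^sup>2 * \<rho>\<^sup>2" by (simp add: power2_eq_square)
    have "\<rho>\<^sup>2 * \<rho>\<^sup>2 \<le> \<rho>\<^sup>2 * (s1\<^sup>2 * (1 + 3 * \<rho>))" using A B C by simp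
    then have q: "\<rho>\<^sup>2 \<le> s1\<^sup>2 * (1 + 3 * \<rho>)"
      using rp mult_le_cancel_left_pos[of "\<rho>\<^sup>2" "\<rho>\<^sup>2" "s1\<^sup>2 * (1 + 3 * \<rho>)"] by simp
    have "\<rho> = sqrt (\<rho>\<^sup>2)" using rp by simp
    also have "\<dots> \<le> sqrt (s1\<^sup>2 * (1 + 3 * \<rho>))" using q by (rule real_sqrt_le_mono)
    also have "\<dots> = s1 * sqrt (1 + 3 * \<rho>)" using s10 by (simp add: real_sqrt_mult)
    finally have "\<rho> \<le> s1 * sqrt (1 + 3 * \<rho>)" .
    moreover have "0 < sqrt (1 + 3 * \<rho>)" using rp by simp
    ultimately show ?thesis by (simp add: pos_divide_le_eq)
  qed
  have Dr0: "0 \<le> Dr \<rho>" using sinh_ge_x[OF \<rho>0] \<rho>0 by (simp add: Dr_def)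
  have RleD: "(\<integral>x. \<bar>R x\<bar> \<partial>M) \<le> Dr \<rho> * s1"
  proof (cases "\<rho> = 0")
    case True then show ?thesis using part2 by (simp add: Dr_def)
  next
    case False
    then have rp: "0 < \<rho>" using \<rho>0 by simp
    have sh: "0 \<le> sinh \<rho> - \<rho>" using sinh_ge_x[OF \<rho>0] by simp
    have "Dr \<rho> * (\<rho> / sqrt (1 + 3 * \<rho>)) = sqrt ((1 + 3 * \<rho>) * (sinh \<rho> - \<rho>) / \<rho>\<^sup>2) * sqrt (\<rho>\<^sup>2 / (1 + 3 * \<rho>))"
      using rp by (simp add: Dr_def real_sqrt_divide)
    also have "\<dots> = sqrt ((1 + 3 * \<rho>) * (sinh \<rho> - \<rho>) / \<rho>\<^sup>2 * (\<rho>\<^sup>2 / (1 + 3 * \<rho>)))"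
      by (rule real_sqrt_mult[symmetric])
    also have "\<dots> = sqrt (sinh \<rho> - \<rho>)"
    proof (intro arg_cong[where f=sqrt])
      have "1 + 3 * \<rho> \<noteq> 0" "\<rho>\<^sup>2 \<noteq> 0" using rp by auto
      then show "(1 + 3 * \<rho>) * (sinh \<rho> - \<rho>) / \<rho>\<^sup>2 * (\<rho>\<^sup>2 / (1 + 3 * \<rho>)) = sinh \<rho> - \<rho>"
        by (simp add: divide_simps)
    qed
    finally have eq: "Dr \<rho> * (\<rho> / sqrt (1 + 3 * \<rho>)) = sqrt (sinh \<rho> - \<rho>)" .
    have "Dr \<rho> * (\<rho> / sqrt (1 + 3 * \<rho>)) \<le> Dr \<rho> * s1"
      using part3 Dr0 by (intro mult_left_mono)
    then show ?thesis using part2 eq by linarith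
  qed
  have iS: "integrable M (\<lambda>x. \<bar>S x\<bar>)" by (rule bnd_integrable[OF bnd_abs[OF bS]]) measurable
  have iR: "integrable M (\<lambda>x. \<bar>R x\<bar>)" by (rule bnd_integrable[OF bnd_abs[OF bR]]) measurable
  have iP: "integrable M (\<lambda>x. \<bar>Psi n (\<lambda>i. Y i x)\<bar>)" by (rule bnd_integrable[OF bnd_abs[OF bPn]]) measurable
  have PRS: "Psi n (\<lambda>i. Y i x) = R x + S x" for x unfolding R_def S_def by simp
  have up: "(\<integral>x. \<bar>Psi n (\<lambda>i. Y i x)\<bar> \<partial>M) \<le> (\<integral>x. \<bar>R x\<bar> \<partial>M) + s1"
  proof -
    have "(\<integral>x. \<bar>Psi n (\<lambda>i. Y i x)\<bar> \<partial>M) \<le> (\<integral>x. \<bar>R x\<bar> + \<bar>S x\<bar> \<partial>M)"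
      by (rule integral_mono[OF iP Bochner_Integration.integrable_add[OF iR iS]]) (simp add: PRS abs_triangle_ineq)
    also have "\<dots> = (\<integral>x. \<bar>R x\<bar> \<partial>M) + s1" unfolding s1_def using iR iS by simp
    finally show ?thesis .
  qed
  have lo: "s1 \<le> (\<integral>x. \<bar>Psi n (\<lambda>i. Y i x)\<bar> \<partial>M) + (\<integral>x. \<bar>R x\<bar> \<partial>M)"
  proof -
    have "s1 \<le> (\<integral>x. \<bar>Psi n (\<lambda>i. Y i x)\<bar> + \<bar>R x\<bar> \<partial>M)"
      unfolding s1_def
      by (rule integral_mono[OF iS Bochner_Integration.integrable_add[OF iP iR]]) (unfold PRS, arith)
    also have "\<dots> = (\<integral>x. \<bar>Psi n (\<lambda>i. Y i x)\<bar> \<partial>M) + (\<integral>x. \<bar>R x\<bar> \<partial>M)" using iR iP by simp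
    finally show ?thesis .
  qed
  have part5: "(1 - Dr \<rho>) * s1 \<le> (\<integral>x. \<bar>Psi n (\<lambda>i. Y i x)\<bar> \<partial>M)"
    using lo RleD by (simp add: algebra_simps)
  have part6: "(\<integral>x. \<bar>Psi n (\<lambda>i. Y i x)\<bar> \<partial>M) \<le> (1 + Dr \<rho>) * s1"
    using up RleD by (simp add: algebra_simps)
  show ?thesis
    using part1 part2 part3 Dr_mono part5 part6 unfolding s1_def by auto
qed

end
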